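(* Let $\mathcal{F}$ be a regular family. Define $U_{\mathcal{F}}:\textbf{Tr}(2\times\mathbb{N})\to\textbf{Tr}(2\times\mathbb{N})$ by: $\varnothing\in U_{\mathcal{F}}(T)$, and for $k\geqslant1$, $(\varepsilon_i,n_i)_{i=1}^k\in U_{\mathcal{F}}(T)$ if and only if either $(\varepsilon_i,n_i)_{i=1}^k\in T$ or $\overline{(n_i)_{i=1}^k}\in\mathcal{F}$. Then $U_{\mathcal{F}}$ is continuous, and $U_{\mathcal{F}}(T)\in C$ if and only if $T\in C$.
   Context: A family $\mathcal{F}$ of finite subsets of $\mathbb{N}$ is regular if it is hereditary, spreading (if $(m_i)_{i=1}^k\in\mathcal{F}$ increasing and $n_1<\dots<n_k$, $m_i\leqslant n_i$, then $(n_i)_{i=1}^k\in\mathcal{F}$) and compact in $2^{\mathbb{N}}$; finite sets are identified with their increasing enumerations, so $\mathcal{F}$ is a tree on $\mathbb{N}$. For a set $\Lambda$, $\textbf{Tr}(\Lambda)$ is the set of subsets of $\Lambda^{<\mathbb{N}}$ (finite sequences) closed under initial segments, with the topology inherited from $2^{\Lambda^{<\mathbb{N}}}$ (product topology); $\textbf{Tr}=\textbf{Tr}(\mathbb{N})$; $2=\{0,1\}$. A tree $T$ on $\mathbb{N}$ is ill-founded if there is $(n_i)_{i=1}^\infty$ with $(n_i)_{i=1}^l\in T$ for all $l$, and well-founded otherwise; $\textbf{IF}$ denotes the ill-founded trees. For $T\in\textbf{Tr}(2\times\mathbb{N})$ and $\sigma=(\varepsilon_n)\in2^{\mathbb{N}}$,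 $T(\sigma)=\varnothing$ if $T=\varnothing$, and otherwise $T(\sigma)=\{\varnothing\}\cup\{(n_i)_{i=1}^l:(\varepsilon_i,n_i)_{i=1}^l\in T\}$. $C=\{T\in\textbf{Tr}(2\times\mathbb{N}):T(\sigma)\in\textbf{IF}\text{ for all }\sigma\in2^{\mathbb{N}}\}$. For $v=(n_1,\dots,n_k)$, $\overline{v}=(n_1,n_1+n_2,\dots,n_1+\dots+n_k)$. *)

theory Defs
  imports "HOL-Analysis.Analysis" "HOL-Library.Sublist"
begin

text \<open>The Cantor-cube topology on \<open>2^X\<close>: subsets of X identified with their
  characteristic functions \<open>X \<Rightarrow> 2\<close>, \<open>2 = {False, True}\<close> discrete, product topology.\<close>
definition cantor_top :: "'b set topology" where
  "cantor_top = pullback_topology UNIV (\<lambda>A x. x \<in> A)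
      (product_topology (\<lambda>_. discrete_topology (UNIV :: bool set)) UNIV)"

definition Tr :: "'a list set set" where
  "Tr = {T. \<forall>s\<in>T. \<forall>t. prefix t s \<longrightarrow> t \<in> T}"

definition IF :: "nat list set set" where
  "IF = {T \<in> Tr. \<exists>f :: nat \<Rightarrow> nat. \<forall>l. map f [0..<l] \<in> T}"

text \<open>\<open>T(\<sigma>)\<close> for \<open>T \<in> Tr(2\<times>\<nat>)\<close> and \<open>\<sigma> \<in> 2^\<nat>\<close> (\<open>\<sigma> i\<close> is the (i+1)-th entry).\<close>
definition tree_at :: "(bool \<times> nat) list set \<Rightarrow> (nat \<Rightarrow> bool) \<Rightarrow> nat list set" where
  "tree_at T \<sigma> = (if T = {} then {}
     else insert [] {ns. zip (map \<sigma> [0..<length ns]) ns \<in> T})"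

definition C_set :: "(bool \<times> nat) list set set" where
  "C_set = {T \<in> Tr. \<forall>\<sigma>. tree_at T \<sigma> \<in> IF}"

definition psums :: "nat list \<Rightarrow> nat list" where
  "psums v = map (\<lambda>k. sum_list (take (Suc k) v)) [0..<length v]"

text \<open>Finite sets identified with increasing enumerations.\<close>
definition seq_in :: "nat list \<Rightarrow> nat set set \<Rightarrow> bool" where
  "seq_in s F \<longleftrightarrow> sorted_wrt (<) s \<and> set s \<in> F"

definition regular :: "nat set set \<Rightarrow> bool" where
  "regular F \<longleftrightarrow> (\<forall>A\<in>F. finite A)
     \<and> (\<forall>A\<in>F. \<forall>B. B \<subseteq> A \<longrightarrow> B \<in> F)
     \<and> (\<forall>m n. seq_in m F \<and> sorted_wrt (<) n \<and> length n = length m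
          \<and> (\<forall>i<length m. m ! i \<le> n ! i) \<longrightarrow> seq_in n F)
     \<and> compactin cantor_top F"

definition U_F :: "nat set set \<Rightarrow> (bool \<times> nat) list set \<Rightarrow> (bool \<times> nat) list set" where
  "U_F F T = insert [] {s. s \<noteq> [] \<and> (s \<in> T \<or> seq_in (psums (map snd s)) F)}"

end

theory Submission
  imports Defs
begin

lemma cantor_coord_cont:
  "continuous_map cantor_top (discrete_topology (UNIV::bool set)) (\<lambda>A. P (x \<in> A))"
proof -
  let ?Y = "product_topology (\<lambda>_. discrete_topology (UNIV :: bool set)) (UNIV :: 'a set)"
  have c1: "continuous_map ?Y (discrete_topology UNIV) (\<lambda>h. h x)"
    by (rule continuous_map_product_projection) simp
  have c2: "continuous_map (discrete_topology (UNIV::bool set)) (discrete_topology (UNIV::bool set)) P"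
    by simp
  have "continuous_map ?Y (discrete_topology UNIV) (P \<circ> (\<lambda>h. h x))"
    using continuous_map_compose[OF c1 c2] by simp
  then have "continuous_map (pullback_topology UNIV (\<lambda>A x. x \<in> A) ?Y) (discrete_topology UNIV)
     ((P \<circ> (\<lambda>h. h x)) \<circ> (\<lambda>A x. x \<in> A))"
    by (rule continuous_map_pullback)
  then show ?thesis unfolding cantor_top_def by (simp add: o_def)
qed

lemma cantor_open_notin: "openin cantor_top {C. x \<notin> C}"
proof -
  have "openin cantor_top {A \<in> topspace cantor_top. (\<lambda>A. \<not> (x \<in> A)) A \<in> {True}}"
    by (rule openin_continuous_map_preimage[OF cantor_coord_cont]) simp
  moreover have "topspace cantor_top = (UNIV :: 'a set set)"
    unfolding cantor_top_def topspace_pullback_topology by simp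
  ultimately show ?thesis by simp
qed

lemma U_cont: "continuous_map cantor_top cantor_top (U_F F)"
proof -
  have "continuous_map cantor_top (product_topology (\<lambda>_. discrete_topology (UNIV :: bool set)) UNIV)
      ((\<lambda>A x. x \<in> A) \<circ> U_F F)"
  proof (subst continuous_map_componentwise_UNIV, intro allI)
    fix s :: "(bool \<times> nat) list"
    have "(\<lambda>T. ((\<lambda>A x. x \<in> A) \<circ> U_F F) T s) = (\<lambda>T. (\<lambda>b. s = [] \<or> b \<or> seq_in (psums (map snd s)) F) (s \<in> T))"
      by (auto simp: U_F_def fun_eq_iff)
    then show "continuous_map cantor_top (discrete_topology UNIV) (\<lambda>T. ((\<lambda>A x. x \<in> A) \<circ> U_F F) T s)"
      using cantor_coord_cont[of "\<lambda>b. s = [] \<or> b \<or> seq_in (psums (map snd s)) F" s] by simp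
  qed
  then show ?thesis unfolding cantor_top_def
    by (intro continuous_map_pullback') auto
qed

lemma psums_map: "psums (map f [0..<l]) = map (\<lambda>k. \<Sum>i<Suc k. f i) [0..<l]"
proof -
  have "\<And>k. k < l \<Longrightarrow> sum_list (take (Suc k) (map f [0..<l])) = (\<Sum>i<Suc k. f i)"
  proof -
    fix k assume "k < l"
    then have "take (Suc k) (map f [0..<l]) = map f [0..<Suc k]"
      by (simp add: take_map)
    then show "sum_list (take (Suc k) (map f [0..<l])) = (\<Sum>i<Suc k. f i)"
      by (simp add: sum_list_map_eq_sum_count2 atLeast0LessThan[symmetric] sum_set_upt_conv_sum_list_nat[symmetric])
  qed
  then show ?thesis unfolding psums_def by (auto intro!: map_cong)
qed

lemma reg_finite: "regular F \<Longrightarrow> A \<in> F \<Longrightarrow> finite A"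
  unfolding regular_def by (elim conjE) (erule bspec)

lemma reg_compact: "regular F \<Longrightarrow> compactin cantor_top F"
  unfolding regular_def by (elim conjE)

lemma seq_in_prefix:
  assumes reg: "regular F" and "seq_in (map S [0..<l']) F" and "l \<le> l'"
  shows "seq_in (map S [0..<l]) F"
proof -
  have pre: "map S [0..<l'] = map S [0..<l] @ map S [l..<l']"
    using assms(3) by (metis map_append le_Suc_ex upt_add_eq_append zero_le)
  have "sorted_wrt (<) (map S [0..<l])"
    using assms(2) unfolding seq_in_def pre by (simp add: sorted_wrt_append)
  moreover have "set (map S [0..<l]) \<subseteq> set (map S [0..<l'])" using pre by auto
  ultimately show ?thesis using assms(2) reg unfolding seq_in_def regular_def by blast
qed

lemma no_branch:
  assumes reg: "regular F"
  shows "\<not> (\<forall>l. seq_in (map (S::nat\<Rightarrow>nat) [0..<l]) F)"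
proof
  assume all: "\<forall>l. seq_in (map S [0..<l]) F"
  have "S k < S (Suc k)" for k
  proof -
    have "sorted_wrt (<) (map S [0..<Suc (Suc k)])" using all unfolding seq_in_def by blast
    then show ?thesis by (simp add: sorted_wrt_append)
  qed
  then have sm: "strict_mono S" by (simp add: strict_mono_Suc_iff)
  then have inf: "infinite (range S)"
    using finite_imageD infinite_UNIV_nat by (metis strict_mono_imp_inj_on)
  have comp: "compactin cantor_top F" using reg by (rule reg_compact)
  let ?V = "\<lambda>n. {C. S n \<notin> C}"
  have cov: "F \<subseteq> \<Union>(range ?V)"
  proof
    fix B assume "B \<in> F"
    then have "finite B" using reg reg_finite by blast
    then have "\<not> range S \<subseteq> B" using inf finite_subset by blast
    then show "B \<in> \<Union>(range ?V)" by auto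
  qed
  have opn: "\<forall>X\<in>range ?V. openin cantor_top X" by (auto intro: cantor_open_notin)
  have ex: "\<exists>G. finite G \<and> G \<subseteq> range ?V \<and> F \<subseteq> \<Union>G"
  proof -
    have "\<forall>\<U>. (\<forall>U \<in> \<U>. openin cantor_top U) \<and> F \<subseteq> \<Union>\<U>
          \<longrightarrow> (\<exists>G. finite G \<and> G \<subseteq> \<U> \<and> F \<subseteq> \<Union>G)"
      using comp unfolding compactin_def by (rule conjunct2)
    then have "(\<forall>U \<in> range ?V. openin cantor_top U) \<and> F \<subseteq> \<Union>(range ?V)
          \<longrightarrow> (\<exists>G. finite G \<and> G \<subseteq> range ?V \<and> F \<subseteq> \<Union>G)" by (rule spec)
    then show ?thesis using cov opn by blast
  qed
  then obtain G where G: "finite G" "G \<subseteq> range ?V" "F \<subseteq> \<Union>G" by (elim exE conjE)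
  have "\<exists>N. N \<subseteq> UNIV \<and> finite N \<and> G = ?V ` N"
    using finite_subset_image[OF G(1) G(2)] by blast
  then obtain N where N: "finite N" "G = ?V ` N" by blast
  obtain l where l: "\<forall>n\<in>N. n < l"
  proof -
    have "\<forall>n\<in>N. n < Suc (Max N)" using N(1) by (simp add: le_imp_less_Suc)
    then show ?thesis using that by blast
  qed
  have "set (map S [0..<l]) \<in> F" using all unfolding seq_in_def by blast
  then have "set (map S [0..<l]) \<in> \<Union>G" using G(3) by blast
  then obtain n where "n \<in> N" "S n \<notin> set (map S [0..<l])" using N(2) by blast
  then show False using l by auto
qed

lemma tree_at_Tr:
  assumes "T \<in> Tr" shows "tree_at T \<sigma> \<in> Tr"
proof -
  have "t \<in> tree_at T \<sigma>" if H: "s \<in> tree_at T \<sigma>" "prefix t s" for s t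
  proof (cases "T = {}")
    case True then show ?thesis using H by (simp add: tree_at_def)
  next
    case False
    show ?thesis
    proof (cases "s = []")
      case True then show ?thesis using H False by (simp add: tree_at_def)
    next
      case sne: False
      then have sT: "zip (map \<sigma> [0..<length s]) s \<in> T" using H(1) False by (simp add: tree_at_def)
      obtain r where r: "s = t @ r" using H(2) prefix_def by blast
      have "zip (map \<sigma> [0..<length t]) t = take (length t) (zip (map \<sigma> [0..<length s]) s)"
        using r by (simp add: take_zip take_map)
      then have "prefix (zip (map \<sigma> [0..<length t]) t) (zip (map \<sigma> [0..<length s]) s)"
        by (metis take_is_prefix)
      then have "zip (map \<sigma> [0..<length t]) t \<in> T" using sT assms unfolding Tr_def by blast
      then show ?thesis using False by (simp add: tree_at_def)
    qed
  qed
  then show ?thesis unfolding Tr_def by blast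
qed

lemma zip_br: "zip (map \<sigma> [0..<length (map f [0..<l])]) (map f [0..<l]) = map (\<lambda>i. (\<sigma> i, f i)) [0..<l]"
  by (simp add: zip_map_map zip_same_conv_map)

lemma U_Tr:
  assumes reg: "regular F" and "T \<in> Tr" shows "U_F F T \<in> Tr"
proof -
  have "t \<in> U_F F T" if H: "s \<in> U_F F T" "prefix t s" for s t
  proof (cases "t = []")
    case True then show ?thesis by (simp add: U_F_def)
  next
    case tne: False
    then have sne: "s \<noteq> []" using H(2) by auto
    then have "s \<in> T \<or> seq_in (psums (map snd s)) F" using H(1) by (simp add: U_F_def)
    then show ?thesis
    proof
      assume "s \<in> T" then have "t \<in> T" using H(2) assms(2) unfolding Tr_def by blast
      then show ?thesis using tne by (simp add: U_F_def)
    next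
      assume a: "seq_in (psums (map snd s)) F"
      obtain r where r: "s = t @ r" using H(2) prefix_def by blast
      let ?f = "\<lambda>i. snd (s ! i)"
      have ms: "map snd s = map ?f [0..<length s]" by (rule nth_equalityI) simp_all
      have mt: "map snd t = map ?f [0..<length t]" using r by (intro nth_equalityI) (simp_all add: nth_append)
      have "seq_in (map (\<lambda>k. \<Sum>i<Suc k. ?f i) [0..<length s]) F" using a by (simp only: ms psums_map)
      then have "seq_in (map (\<lambda>k. \<Sum>i<Suc k. ?f i) [0..<length t]) F"
        by (rule seq_in_prefix[OF reg]) (simp add: r)
      then have "seq_in (psums (map snd t)) F" by (simp only: mt psums_map)
      then show ?thesis using tne by (simp add: U_F_def)
    qed
  qed
  then show ?thesis unfolding Tr_def by blast
qed

lemma T_sub_U: "T \<subseteq> U_F F T" by (auto simp: U_F_def)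

lemma tree_at_br:
  assumes "T \<noteq> {}"
  shows "map f [0..<l] \<in> tree_at T \<sigma> \<longleftrightarrow> l = 0 \<or> map (\<lambda>i. (\<sigma> i, f i)) [0..<l] \<in> T"
proof -
  have "zip (map \<sigma> [0..<l]) (map f [0..<l]) = map (\<lambda>i. (\<sigma> i, f i)) [0..<l]"
    using zip_br[of \<sigma> f l] by simp
  then show ?thesis using assms by (auto simp: tree_at_def)
qed

lemma br_prefix: "l0 \<le> l \<Longrightarrow> prefix (map g [0..<l0]) (map g [0..<l])"
  by (metis le_Suc_ex map_append prefixI upt_add_eq_append zero_le)

lemma Tr_prefix: "T \<in> Tr \<Longrightarrow> s \<in> T \<Longrightarrow> prefix t s \<Longrightarrow> t \<in> T"
  unfolding Tr_def by blast

lemma IF_intro: "X \<in> Tr \<Longrightarrow> (\<And>l. map f [0..<l] \<in> X) \<Longrightarrow> X \<in> IF"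
  unfolding IF_def by blast

lemma U_C_imp:
  assumes reg: "regular F" and T: "T \<in> Tr" and UC: "U_F F T \<in> C_set"
  shows "T \<in> C_set"
proof -
  have "tree_at T \<sigma> \<in> IF" for \<sigma>
  proof -
    have "tree_at (U_F F T) \<sigma> \<in> IF" using UC unfolding C_set_def by blast
    then obtain f where f: "\<And>l. map f [0..<l] \<in> tree_at (U_F F T) \<sigma>" unfolding IF_def by blast
    have Une: "U_F F T \<noteq> {}" by (simp add: U_F_def)
    let ?b = "\<lambda>l. map (\<lambda>i. (\<sigma> i, f i)) [0..<l]"
    let ?S = "\<lambda>k. \<Sum>i<Suc k. f i"
    have alt: "?b l \<in> T \<or> seq_in (map ?S [0..<l]) F" if "l \<ge> 1" for l
    proof -
      have "l = 0 \<or> ?b l \<in> U_F F T"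
        using tree_at_br[OF Une, where f=f and l=l and \<sigma>=\<sigma>] f[of l] by blast
      then have "?b l \<in> U_F F T" using that by simp
      moreover have "map snd (?b l) = map f [0..<l]" by simp
      ultimately show ?thesis using that by (simp add: U_F_def psums_map)
    qed
    have allT: "?b l \<in> T" if "l \<ge> 1" for l
    proof (rule ccontr)
      assume nT: "?b l \<notin> T"
      have big: "seq_in (map ?S [0..<l']) F" if "l' \<ge> l" for l'
      proof -
        have "?b l' \<notin> T"
        proof
          assume "?b l' \<in> T"
          then have "?b l \<in> T" using Tr_prefix[OF T _ br_prefix[OF that]] by blast
          then show False using nT by blast
        qed
        then show ?thesis using alt[of l'] that \<open>l \<ge> 1\<close> by simp
      qed
      have "seq_in (map ?S [0..<l'']) F" for l''
      proof -
        have "seq_in (map ?S [0..<max l'' l]) F" by (rule big) simp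
        then show ?thesis by (rule seq_in_prefix[OF reg]) simp
      qed
      then show False using no_branch[OF reg, of ?S] by blast
    qed
    have Tne: "T \<noteq> {}" using allT[of 1] by auto
    have "map f [0..<l] \<in> tree_at T \<sigma>" for l
    proof (cases "l = 0")
      case True then show ?thesis using tree_at_br[OF Tne, where f=f and l=l and \<sigma>=\<sigma>] by blast
    next
      case False then have "?b l \<in> T" using allT by simp
      then show ?thesis using tree_at_br[OF Tne, where f=f and l=l and \<sigma>=\<sigma>] by blast
    qed
    then show ?thesis by (rule IF_intro[OF tree_at_Tr[OF T]])
  qed
  then show ?thesis using T unfolding C_set_def by blast
qed

lemma C_imp_U:
  assumes reg: "regular F" and T: "T \<in> Tr" and TC: "T \<in> C_set"
  shows "U_F F T \<in> C_set"
proof -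
  have "tree_at (U_F F T) \<sigma> \<in> IF" for \<sigma>
  proof -
    have "tree_at T \<sigma> \<in> IF" using TC unfolding C_set_def by blast
    then obtain f where f: "\<And>l. map f [0..<l] \<in> tree_at T \<sigma>" unfolding IF_def by blast
    have Tne: "T \<noteq> {}" using f[of 0] by (auto simp: tree_at_def)
    have Une: "U_F F T \<noteq> {}" by (simp add: U_F_def)
    have "map f [0..<l] \<in> tree_at (U_F F T) \<sigma>" for l
    proof -
      have "l = 0 \<or> map (\<lambda>i. (\<sigma> i, f i)) [0..<l] \<in> T"
        using tree_at_br[OF Tne, where f=f and l=l and \<sigma>=\<sigma>] f[of l] by blast
      then have "l = 0 \<or> map (\<lambda>i. (\<sigma> i, f i)) [0..<l] \<in> U_F F T"
        using T_sub_U by blast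
      then show ?thesis using tree_at_br[OF Une, where f=f and l=l and \<sigma>=\<sigma>] by blast
    qed
    then show ?thesis by (rule IF_intro[OF tree_at_Tr[OF U_Tr[OF reg T]]])
  qed
  then show ?thesis using U_Tr[OF reg T] unfolding C_set_def by blast
qed

theorem proposition4p7:
  assumes "regular F"
  shows "continuous_map (subtopology cantor_top Tr) (subtopology cantor_top Tr) (U_F F)
         \<and> (\<forall>T \<in> Tr. U_F F T \<in> C_set \<longleftrightarrow> T \<in> C_set)"
proof
  show "continuous_map (subtopology cantor_top Tr) (subtopology cantor_top Tr) (U_F F)"
    unfolding continuous_map_in_subtopology
    using continuous_map_from_subtopology[OF U_cont] U_Tr[OF assms]
    by (auto simp: topspace_subtopology)
  show "\<forall>T \<in> Tr. U_F F T \<in> C_set \<longleftrightarrow> T \<in> C_set"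
    using U_C_imp[OF assms] C_imp_U[OF assms] by blast
qed

end
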